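(* Let $(G,\mathcal{C})$ be a 2-colored graph, $G=(V,E)$, and let $l,u:E\to\mathbb{N}$ satisfy $l(e)\le u(e)$ for all $e\in E$. If there exists a rational vector $x\in\mathcal{A}(G,\mathcal{C})$ with $l(e)\le x(e)\le u(e)$ for all $e\in E$, then there exists an integral vector $y\in\mathcal{A}(G,\mathcal{C})$ with $2l(e)\le y(e)\le 2u(e)$ for all $e\in E$.
   Context: Graphs are finite, undirected, may have parallel edges but no loops; $\mathcal{C}:E\to\{R,B\}$ is a red/blue edge coloring. The alternating cone $\mathcal{A}(G,\mathcal{C})\subseteq\mathbb{R}^E$ is the set of $x$ with $x(e)\ge0$ for all $e$ and, at every vertex $v$, the sum of $x(e)$ over red edges at $v$ equals the sum of $x(e)$ over blue edges at $v$. *)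

theory Defs
  imports Complex_Main
begin

datatype color = Red | Blue

text \<open>A graph (V,E) with parallel edges allowed but no loops: edges are elements of
  an abstract type, each edge e has a set of endpoints ends e consisting of exactly
  two distinct vertices of V.\<close>
definition graph :: "'v set \<Rightarrow> 'e set \<Rightarrow> ('e \<Rightarrow> 'v set) \<Rightarrow> bool" where
  "graph V E ends \<longleftrightarrow> finite V \<and> finite E \<and> (\<forall>e\<in>E. ends e \<subseteq> V \<and> card (ends e) = 2)"

text \<open>Alternating cone; vectors in R^E are functions vanishing outside E.\<close>
definition alternating_cone ::
  "'v set \<Rightarrow> 'e set \<Rightarrow> ('e \<Rightarrow> 'v set) \<Rightarrow> ('e \<Rightarrow> color) \<Rightarrow> ('e \<Rightarrow> real) set" where
  "alternating_cone V E ends col =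
     {x. (\<forall>e. e \<notin> E \<longrightarrow> x e = 0) \<and> (\<forall>e\<in>E. 0 \<le> x e) \<and>
         (\<forall>v\<in>V. (\<Sum>e\<in>{e\<in>E. v \<in> ends e \<and> col e = Red}. x e) =
                 (\<Sum>e\<in>{e\<in>E. v \<in> ends e \<and> col e = Blue}. x e))}"

end

theory Submission
  imports Defs
begin
lemma kernel_exists:
  fixes c :: "'n \<Rightarrow> 'i \<Rightarrow> real"
  assumes "finite P" "finite S" "card P < card S"
  shows "\<exists>d. (\<forall>i. i \<notin> S \<longrightarrow> d i = 0) \<and> (\<exists>i\<in>S. d i \<noteq> 0) \<and> (\<forall>n\<in>P. (\<Sum>i\<in>S. c n i * d i) = 0)"
  using assms
proof (induction P arbitrary: S c rule: finite_induct)
  case empty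
  then obtain i0 where "i0 \<in> S" by fastforce
  then show ?case by (rule_tac x="\<lambda>i. if i = i0 then 1 else 0" in exI) auto
next
  case (insert p P)
  show ?case
  proof (cases "\<forall>i\<in>S. c p i = 0")
    case True
    from insert have "card P < card S" by simp
    with insert.IH[OF insert.prems(1) this, of c] obtain d where
      d: "(\<forall>i. i \<notin> S \<longrightarrow> d i = 0) \<and> (\<exists>i\<in>S. d i \<noteq> 0) \<and> (\<forall>n\<in>P. (\<Sum>i\<in>S. c n i * d i) = 0)"
      by blast
    then show ?thesis using True by (rule_tac x=d in exI) auto
  next
    case False
    then obtain a where a: "a \<in> S" "c p a \<noteq> 0" by blast
    define S' where "S' = S - {a}"
    define c' where "c' = (\<lambda>n i. c n i - c n a * c p i / c p a)"
    have fS': "finite S'" using insert S'_def by simp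
    have cS': "card P < card S'" using insert a S'_def by simp
    from insert.IH[OF fS' cS', of c'] obtain d' where
      d': "\<forall>i. i \<notin> S' \<longrightarrow> d' i = 0" "\<exists>i\<in>S'. d' i \<noteq> 0" "\<forall>n\<in>P. (\<Sum>i\<in>S'. c' n i * d' i) = 0"
      by blast
    define d where "d = d'(a := - (\<Sum>i\<in>S'. c p i * d' i) / c p a)"
    have dS': "\<And>f. (\<Sum>i\<in>S'. f i * d i) = (\<Sum>i\<in>S'. f i * d' i)"
      by (rule sum.cong) (auto simp: d_def S'_def)
    have split: "\<And>f. (\<Sum>i\<in>S. f i * d i) = f a * d a + (\<Sum>i\<in>S'. f i * d' i)"
      using a insert.prems(1) by (simp add: S'_def sum.remove dS'[unfolded S'_def])
    have eqp: "(\<Sum>i\<in>S. c p i * d i) = 0"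
      using a by (simp only: split) (simp add: d_def)
    have eqn: "(\<Sum>i\<in>S. c n i * d i) = 0" if n: "n \<in> P" for n
    proof -
      have "0 = (\<Sum>i\<in>S'. c' n i * d' i)" using d'(3) n by simp
      also have "\<dots> = (\<Sum>i\<in>S'. c n i * d' i) - (c n a / c p a) * (\<Sum>i\<in>S'. c p i * d' i)"
        by (simp add: c'_def sum_subtractf sum_distrib_left algebra_simps)
      also have "\<dots> = (\<Sum>i\<in>S. c n i * d i)"
        using a by (simp only: split) (simp add: d_def)
      finally show ?thesis by simp
    qed
    show ?thesis
    proof (rule exI[of _ d], intro conjI)
      show "\<forall>i. i \<notin> S \<longrightarrow> d i = 0" using d'(1) a by (auto simp: d_def S'_def)
      show "\<exists>i\<in>S. d i \<noteq> 0" using d'(2) by (auto simp: d_def S'_def)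
      show "\<forall>n\<in>insert p P. (\<Sum>i\<in>S. c n i * d i) = 0" using eqp eqn by auto
    qed
  qed
qed


lemma round_circ:
  fixes A :: "'n \<Rightarrow> 'i \<Rightarrow> real" and lo hi :: "'i \<Rightarrow> int" and f :: "'i \<Rightarrow> real"
  assumes finI: "finite I" and finN: "finite N"
    and colA: "\<forall>i\<in>I. \<exists>n1\<in>N. \<exists>n2\<in>N. n1 \<noteq> n2 \<and> A n1 i = 1 \<and> A n2 i = -1 \<and>
                    (\<forall>n\<in>N. n \<noteq> n1 \<and> n \<noteq> n2 \<longrightarrow> A n i = 0)"
  shows "(\<forall>n\<in>N. (\<Sum>i\<in>I. A n i * f i) = 0) \<Longrightarrow> (\<forall>i\<in>I. real_of_int (lo i) \<le> f i \<and> f i \<le> real_of_int (hi i)) \<Longrightarrow>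
     \<exists>g::'i\<Rightarrow>real. (\<forall>i\<in>I. g i \<in> \<int> \<and> real_of_int (lo i) \<le> g i \<and> g i \<le> real_of_int (hi i)) \<and> (\<forall>n\<in>N. (\<Sum>i\<in>I. A n i * g i) = 0)"
proof (induction "card {i\<in>I. f i \<notin> \<int>}" arbitrary: f rule: less_induct)
  case less
  define S where "S = {i\<in>I. f i \<notin> \<int>}"
  have finS: "finite S" using finI S_def by simp
  have SI: "S \<subseteq> I" using S_def by auto
  show ?case
  proof (cases "S = {}")
    case True
    then show ?thesis using less.prems S_def by (rule_tac x=f in exI) auto
  next
    case False
    have Aval: "A n i \<in> {-1,0,1}" if hh: "n \<in> N" "i \<in> I" for n i
    proof -
      obtain n1 n2 where "n1 \<in> N" "n2 \<in> N" "A n1 i = 1" "A n2 i = -1"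
        "\<forall>n\<in>N. n \<noteq> n1 \<and> n \<noteq> n2 \<longrightarrow> A n i = 0" using colA hh(2) by blast
      then show ?thesis using hh(1) by (cases "n = n1"; cases "n = n2") auto
    qed
    have Aint: "A n i \<in> \<int>" if "n \<in> N" "i \<in> I" for n i
      using Aval[OF that] by auto
    define NS where "NS = {n\<in>N. \<exists>i\<in>S. A n i \<noteq> 0}"
    have finNS: "finite NS" using finN NS_def by simp
    have NSN: "NS \<subseteq> N" using NS_def by auto
    have deg2: "2 \<le> card {i\<in>S. A n i \<noteq> 0}" if n: "n \<in> NS" for n
    proof (rule ccontr)
      assume c2: "\<not> 2 \<le> card {i\<in>S. A n i \<noteq> 0}"
      obtain i0 where i0: "i0 \<in> S" "A n i0 \<noteq> 0" using n NS_def by auto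
      have fin1: "finite {i\<in>S. A n i \<noteq> 0}" using finS by simp
      have one: "{i\<in>S. A n i \<noteq> 0} = {i0}"
      proof -
        have "card {i\<in>S. A n i \<noteq> 0} \<le> Suc 0" using c2 by simp
        then have "\<forall>a\<in>{i\<in>S. A n i \<noteq> 0}. \<forall>b\<in>{i\<in>S. A n i \<noteq> 0}. a = b"
          using card_le_Suc0_iff_eq[OF fin1] by blast
        then show ?thesis using i0 by blast
      qed
      have nN: "n \<in> N" using n NS_def by auto
      have i0I: "i0 \<in> I" using i0 SI by auto
      have "(\<Sum>i\<in>I - {i0}. A n i * f i) \<in> \<int>"
      proof (rule Ints_sum)
        fix i assume i: "i \<in> I - {i0}"
        show "A n i * f i \<in> \<int>"
        proof (cases "i \<in> S")
          case True
          then have "A n i = 0" using one i by auto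
          then show ?thesis by simp
        next
          case False
          then show ?thesis using i S_def Aint[OF nN] by (auto intro: Ints_mult)
        qed
      qed
      moreover have "(\<Sum>i\<in>I. A n i * f i) = A n i0 * f i0 + (\<Sum>i\<in>I - {i0}. A n i * f i)"
        using i0I finI by (simp add: sum.remove)
      ultimately have "A n i0 * f i0 \<in> \<int>" using less.prems(1) nN
        by (metis Ints_0 Ints_diff add_diff_cancel_right')
      moreover have "A n i0 = 1 \<or> A n i0 = -1" using Aval[OF nN i0I] i0 by auto
      ultimately have "f i0 \<in> \<int>"
        by (metis Ints_minus mult_1 mult_minus_left minus_minus)
      then show False using i0 S_def by auto
    qed
    have colsum: "(\<Sum>n\<in>NS. A n i) = 0" and colcard: "card {n\<in>NS. A n i \<noteq> 0} = 2"
      if i: "i \<in> S" for i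
    proof -
      obtain n1 n2 where nn: "n1 \<in> N" "n2 \<in> N" "n1 \<noteq> n2" "A n1 i = 1" "A n2 i = -1"
        "\<forall>n\<in>N. n \<noteq> n1 \<and> n \<noteq> n2 \<longrightarrow> A n i = 0" using colA i SI by blast
      have inNS: "n1 \<in> NS" "n2 \<in> NS" using nn i NS_def by auto
      have "{n\<in>NS. A n i \<noteq> 0} = {n1, n2}" using nn inNS NSN by auto
      then show "card {n\<in>NS. A n i \<noteq> 0} = 2" using nn by simp
      have "(\<Sum>n\<in>NS. A n i) = (\<Sum>n\<in>{n1,n2}. A n i)"
        by (rule sum.mono_neutral_right) (use finNS inNS nn NSN in auto)
      then show "(\<Sum>n\<in>NS. A n i) = 0" using nn by simp
    qed
    have "2 * card NS \<le> (\<Sum>n\<in>NS. card {i\<in>S. A n i \<noteq> 0})"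
      using sum_mono[of NS "\<lambda>_. 2" "\<lambda>n. card {i\<in>S. A n i \<noteq> 0}", OF deg2] by simp
    also have "\<dots> = (\<Sum>n\<in>NS. \<Sum>i\<in>S. if A n i \<noteq> 0 then 1 else 0)"
      using finS by (simp add: sum.inter_filter[symmetric])
    also have "\<dots> = (\<Sum>i\<in>S. \<Sum>n\<in>NS. if A n i \<noteq> 0 then 1 else 0)"
      by (rule sum.swap)
    also have "\<dots> = (\<Sum>i\<in>S. card {n\<in>NS. A n i \<noteq> 0})"
      using finNS by (simp add: sum.inter_filter[symmetric])
    also have "\<dots> = 2 * card S" using colcard by simp
    finally have cardle: "card NS \<le> card S" by simp
    obtain i1 where i1: "i1 \<in> S" using False by auto
    then obtain n0 where n0: "n0 \<in> NS"
    proof -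
      obtain n1 where "n1 \<in> N" "A n1 i1 = 1" using colA SI i1 by blast
      then have "n1 \<in> NS" using i1 NS_def by auto
      then show ?thesis using that by blast
    qed
    define P where "P = NS - {n0}"
    have "card P < card S" using cardle n0 finNS P_def
      by (metis card_Diff1_less order_less_le_trans)
    from kernel_exists[OF _ finS this, of A] finNS P_def obtain d where
      d: "\<forall>i. i \<notin> S \<longrightarrow> d i = 0" "\<exists>i\<in>S. d i \<noteq> 0" "\<forall>n\<in>P. (\<Sum>i\<in>S. A n i * d i) = 0"
      by auto
    have sumSI: "(\<Sum>i\<in>I. A n i * d i) = (\<Sum>i\<in>S. A n i * d i)" for n
      by (rule sum.mono_neutral_right) (use finI SI d(1) in auto)
    have "(\<Sum>n\<in>NS. \<Sum>i\<in>S. A n i * d i) = (\<Sum>i\<in>S. (\<Sum>n\<in>NS. A n i) * d i)"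
      by (simp add: sum.swap[of _ NS] sum_distrib_right)
    also have "\<dots> = 0" using colsum by simp
    finally have "(\<Sum>i\<in>S. A n0 i * d i) + (\<Sum>n\<in>P. \<Sum>i\<in>S. A n i * d i) = 0"
      using n0 finNS P_def by (simp add: sum.remove)
    then have eqn0: "(\<Sum>i\<in>S. A n0 i * d i) = 0" using d(3) by simp
    have dker: "(\<Sum>i\<in>I. A n i * d i) = 0" if n: "n \<in> N" for n
    proof (cases "n \<in> NS")
      case True
      then show ?thesis using eqn0 d(3) P_def sumSI by (cases "n = n0") auto
    next
      case False
      then have "\<forall>i\<in>S. A n i = 0" using n NS_def by auto
      then show ?thesis using sumSI by simp
    qed
    define D where "D = {i\<in>S. d i \<noteq> 0}"
    have finD: "finite D" "D \<noteq> {}" using finS d(2) D_def by auto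
    define r where "r = (\<lambda>i. if d i > 0 then (real_of_int (ceiling (f i)) - f i) / d i
                             else (real_of_int (floor (f i)) - f i) / d i)"
    have fl: "real_of_int (floor (f i)) < f i" "f i < real_of_int (ceiling (f i))" if "i \<in> S" for i
    proof -
      have ni: "f i \<notin> \<int>" using that S_def by auto
      have "real_of_int (floor (f i)) \<noteq> f i" using ni by (metis Ints_of_int)
      then show "real_of_int (floor (f i)) < f i" using of_int_floor_le[of "f i"] by linarith
      have "real_of_int (ceiling (f i)) \<noteq> f i" using ni by (metis Ints_of_int)
      then show "f i < real_of_int (ceiling (f i))" using le_of_int_ceiling[of "f i"] by linarith
    qed
    have rpos: "r i > 0" if "i \<in> D" for i
      using that fl[of i] D_def by (auto simp: r_def divide_pos_pos divide_neg_neg)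
    define t where "t = Min (r ` D)"
    have tpos: "t > 0" using finD rpos t_def by simp
    have tle: "t \<le> r i" if "i \<in> D" for i using finD that t_def by simp
    obtain istar where istar: "istar \<in> D" "t = r istar"
      using finD t_def by (metis Min_in finite_imageI image_iff image_is_empty)
    define f' where "f' = (\<lambda>i. f i + t * d i)"
    have f'eq: "\<forall>n\<in>N. (\<Sum>i\<in>I. A n i * f' i) = 0"
      using less.prems(1) dker
      by (simp add: f'_def distrib_left sum.distrib algebra_simps flip: sum_distrib_left)
    have f'bd: "\<forall>i\<in>I. lo i \<le> f' i \<and> f' i \<le> hi i \<and>
       (i \<in> D \<longrightarrow> real_of_int (floor (f i)) \<le> f' i \<and> f' i \<le> real_of_int (ceiling (f i)))"
    proof
      fix i assume iI: "i \<in> I"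
      have lh: "lo i \<le> f i" "f i \<le> hi i" using less.prems(2) iI by auto
      show "lo i \<le> f' i \<and> f' i \<le> hi i \<and>
       (i \<in> D \<longrightarrow> real_of_int (floor (f i)) \<le> f' i \<and> f' i \<le> real_of_int (ceiling (f i)))"
      proof (cases "i \<in> D")
        case False
        then have "d i = 0" using d(1) D_def by auto
        then show ?thesis using lh False f'_def by simp
      next
        case True
        have iS: "i \<in> S" using True D_def by auto
        have lofl: "real_of_int (lo i) \<le> real_of_int (floor (f i))" using lh by (simp add: le_floor_iff)
        have cehi: "real_of_int (ceiling (f i)) \<le> real_of_int (hi i)" using lh by (simp add: ceiling_le_iff)
        have tr: "t \<le> r i" using tle True by simp
        show ?thesis
        proof (cases "d i > 0")
          case True
          have "t * d i \<le> r i * d i" using tr True by (simp add: mult_right_mono)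
          also have "r i * d i = real_of_int (ceiling (f i)) - f i" using True by (simp add: r_def)
          finally have "f' i \<le> real_of_int (ceiling (f i))" by (simp add: f'_def)
          moreover have "f i \<le> f' i" using True tpos by (simp add: f'_def)
          ultimately show ?thesis using lofl cehi lh fl[OF iS] by linarith
        next
          case False
          then have dn: "d i < 0" using \<open>i \<in> D\<close> D_def by auto
          have "r i * d i \<le> t * d i" using tr dn by (simp add: mult_right_mono_neg)
          moreover have "r i * d i = real_of_int (floor (f i)) - f i" using dn by (simp add: r_def)
          ultimately have "real_of_int (floor (f i)) \<le> f' i" by (simp add: f'_def)
          moreover have "f' i \<le> f i" using dn tpos by (simp add: f'_def mult_pos_neg less_imp_le)
          ultimately show ?thesis using lofl cehi lh fl[OF iS] by linarith
        qed
      qed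
    qed
    have istarint: "f' istar \<in> \<int>"
    proof -
      have dne: "d istar \<noteq> 0" using istar D_def by auto
      have "f' istar = f istar + r istar * d istar" using istar f'_def by simp
      then show ?thesis using dne by (cases "d istar > 0") (auto simp: r_def)
    qed
    have sub: "{i\<in>I. f' i \<notin> \<int>} \<subseteq> S - {istar}"
    proof
      fix i assume i: "i \<in> {i\<in>I. f' i \<notin> \<int>}"
      have "i \<in> S"
      proof (rule ccontr)
        assume "i \<notin> S"
        then have "d i = 0" "f i \<in> \<int>" using d(1) i S_def by auto
        then show False using i f'_def by simp
      qed
      then show "i \<in> S - {istar}" using i istarint by auto
    qed
    have "card {i\<in>I. f' i \<notin> \<int>} < card {i\<in>I. f i \<notin> \<int>}"
    proof -
      have "card {i\<in>I. f' i \<notin> \<int>} \<le> card (S - {istar})"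
        by (rule card_mono) (use finS sub in auto)
      also have "\<dots> < card S" by (intro card_Diff1_less) (use istar D_def finS in auto)
      finally show ?thesis using S_def by simp
    qed
    from less.hyps[OF this] f'eq f'bd show ?thesis by blast
  qed
qed

lemma color_sum:
  fixes h :: "'e \<Rightarrow> real"
  assumes "finite E"
  shows "(\<Sum>e\<in>E. if v \<in> ends e then (if col e = Red then 1 else -1) * h e else 0) =
    (\<Sum>e\<in>{e\<in>E. v \<in> ends e \<and> col e = Red}. h e) - (\<Sum>e\<in>{e\<in>E. v \<in> ends e \<and> col e = Blue}. h e)"
proof -
  have "(\<Sum>e\<in>{e\<in>E. v \<in> ends e \<and> col e = Red}. h e) - (\<Sum>e\<in>{e\<in>E. v \<in> ends e \<and> col e = Blue}. h e)
      = (\<Sum>e\<in>E. (if v \<in> ends e \<and> col e = Red then h e else 0) - (if v \<in> ends e \<and> col e = Blue then h e else 0))"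
    using assms by (simp add: sum.inter_filter sum_subtractf)
  also have "\<dots> = (\<Sum>e\<in>E. if v \<in> ends e then (if col e = Red then 1 else -1) * h e else 0)"
  proof (rule sum.cong)
    fix e show "(if v \<in> ends e \<and> col e = Red then h e else 0) - (if v \<in> ends e \<and> col e = Blue then h e else 0)
      = (if v \<in> ends e then (if col e = Red then 1 else -1) * h e else 0)" by (cases "col e") auto
  qed simp
  finally show ?thesis by simp
qed

lemma sum_Sig:
  assumes "finite E" "\<forall>e\<in>E. finite (ends e)"
  shows "(\<Sum>i\<in>Sigma E ends. G i) = (\<Sum>e\<in>E. \<Sum>w\<in>ends e. G (e, w))"
  using assms by (subst sum.Sigma) auto

theorem theorem3p1:
  fixes V :: "'v set" and E :: "'e set" and ends :: "'e \<Rightarrow> 'v set"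
    and col :: "'e \<Rightarrow> color" and l u :: "'e \<Rightarrow> nat"
  assumes "graph V E ends"
    and "\<forall>e\<in>E. l e \<le> u e"
    and "\<exists>x\<in>alternating_cone V E ends col. (\<forall>e\<in>E. x e \<in> \<rat> \<and> real (l e) \<le> x e \<and> x e \<le> real (u e))"
  shows "\<exists>y\<in>alternating_cone V E ends col. (\<forall>e\<in>E. y e \<in> \<int> \<and> 2 * real (l e) \<le> y e \<and> y e \<le> 2 * real (u e))"
proof -
  have finV: "finite V" and finE: "finite E" and endsV: "\<forall>e\<in>E. ends e \<subseteq> V"
    and card2: "\<forall>e\<in>E. card (ends e) = 2"
    using assms(1) by (auto simp: graph_def)
  have finends: "\<forall>e\<in>E. finite (ends e)" using card2 by (metis card.infinite zero_neq_numeral)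
  obtain x where xc: "x \<in> alternating_cone V E ends col"
    and xb: "\<forall>e\<in>E. real (l e) \<le> x e \<and> x e \<le> real (u e)" using assms(3) by blast
  have xbal: "\<forall>v\<in>V. (\<Sum>e\<in>{e\<in>E. v \<in> ends e \<and> col e = Red}. x e) = (\<Sum>e\<in>{e\<in>E. v \<in> ends e \<and> col e = Blue}. x e)"
    using xc by (simp add: alternating_cone_def)
  define sg where "sg = (\<lambda>e. if col e = Red then 1 else -1 :: real)"
  define A where "A = (\<lambda>(n::'v \<times> bool) (i::'e \<times> 'v). if snd n then (if snd i = fst n then sg (fst i) else 0)
     else (if fst n \<in> ends (fst i) \<and> snd i \<noteq> fst n then - sg (fst i) else 0))"
  define I where "I = Sigma E ends"
  define N where "N = V \<times> (UNIV :: bool set)"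
  have finI: "finite I" using finE finends I_def by auto
  have finN: "finite N" using finV N_def by simp
  have other: "\<exists>w'. w' \<noteq> w \<and> ends e = {w, w'}" if "e \<in> E" "w \<in> ends e" for e w
  proof -
    have "card (ends e) = 2" using card2 that(1) by blast
    then obtain a b where ab: "a \<noteq> b" "ends e = {a, b}" by (auto simp: card_2_iff)
    then show ?thesis using that(2) by (cases "w = a") auto
  qed
  have colA: "\<forall>i\<in>I. \<exists>n1\<in>N. \<exists>n2\<in>N. n1 \<noteq> n2 \<and> A n1 i = 1 \<and> A n2 i = -1 \<and>
                    (\<forall>n\<in>N. n \<noteq> n1 \<and> n \<noteq> n2 \<longrightarrow> A n i = 0)"
  proof
    fix i assume i: "i \<in> I"
    obtain e w where ew: "i = (e, w)" "e \<in> E" "w \<in> ends e" using i I_def by auto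
    obtain w' where w': "w' \<noteq> w" "ends e = {w, w'}" using other[OF ew(2,3)] by blast
    have inV: "w \<in> V" "w' \<in> V" using endsV ew(2) w' by auto
    show "\<exists>n1\<in>N. \<exists>n2\<in>N. n1 \<noteq> n2 \<and> A n1 i = 1 \<and> A n2 i = -1 \<and> (\<forall>n\<in>N. n \<noteq> n1 \<and> n \<noteq> n2 \<longrightarrow> A n i = 0)"
    proof (cases "col e = Red")
      case True
      show ?thesis
        by (rule bexI[of _ "(w, True)"], rule bexI[of _ "(w', False)"])
           (use True ew w' inV in \<open>auto simp: A_def sg_def N_def\<close>)
    next
      case False
      show ?thesis
        by (rule bexI[of _ "(w', False)"], rule bexI[of _ "(w, True)"])
           (use False ew w' inV in \<open>auto simp: A_def sg_def N_def\<close>)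
    qed
  qed
  have eqT: "(\<Sum>i\<in>I. A (v, True) i * F i) = (\<Sum>e\<in>E. if v \<in> ends e then sg e * F (e, v) else 0)" for v F
  proof -
    have "(\<Sum>i\<in>I. A (v, True) i * F i) = (\<Sum>e\<in>E. \<Sum>w\<in>ends e. A (v, True) (e, w) * F (e, w))"
      unfolding I_def using finE finends by (rule sum_Sig)
    also have "\<dots> = (\<Sum>e\<in>E. if v \<in> ends e then sg e * F (e, v) else 0)"
    proof (rule sum.cong)
      fix e assume e: "e \<in> E"
      have "(\<Sum>w\<in>ends e. A (v, True) (e, w) * F (e, w)) = (\<Sum>w\<in>ends e. if w = v then sg e * F (e, v) else 0)"
        by (rule sum.cong) (auto simp: A_def)
      also have "\<dots> = (if v \<in> ends e then sg e * F (e, v) else 0)"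
        using finends e by (simp add: sum.delta)
      finally show "(\<Sum>w\<in>ends e. A (v, True) (e, w) * F (e, w)) = (if v \<in> ends e then sg e * F (e, v) else 0)" .
    qed simp
    finally show ?thesis .
  qed
  have eqF: "(\<Sum>i\<in>I. A (v, False) i * F i) = - (\<Sum>e\<in>E. if v \<in> ends e then sg e * (\<Sum>w\<in>ends e - {v}. F (e, w)) else 0)" for v F
  proof -
    have "(\<Sum>i\<in>I. A (v, False) i * F i) = (\<Sum>e\<in>E. \<Sum>w\<in>ends e. A (v, False) (e, w) * F (e, w))"
      unfolding I_def using finE finends by (rule sum_Sig)
    also have "\<dots> = (\<Sum>e\<in>E. - (if v \<in> ends e then sg e * (\<Sum>w\<in>ends e - {v}. F (e, w)) else 0))"
    proof (rule sum.cong)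
      fix e assume e: "e \<in> E"
      have "(\<Sum>w\<in>ends e. A (v, False) (e, w) * F (e, w)) = (\<Sum>w\<in>ends e. if v \<in> ends e \<and> w \<noteq> v then - (sg e * F (e, w)) else 0)"
        by (rule sum.cong) (auto simp: A_def)
      also have "\<dots> = (\<Sum>w\<in>{w\<in>ends e. v \<in> ends e \<and> w \<noteq> v}. - (sg e * F (e, w)))"
        using finends e by (simp add: sum.inter_filter)
      also have "\<dots> = - (if v \<in> ends e then sg e * (\<Sum>w\<in>ends e - {v}. F (e, w)) else 0)"
      proof (cases "v \<in> ends e")
        case True
        then have "{w\<in>ends e. v \<in> ends e \<and> w \<noteq> v} = ends e - {v}" by auto
        then show ?thesis using True by (simp add: sum_negf sum_distrib_left)
      next
        case False
        then show ?thesis by simp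
      qed
      finally show "(\<Sum>w\<in>ends e. A (v, False) (e, w) * F (e, w)) = - (if v \<in> ends e then sg e * (\<Sum>w\<in>ends e - {v}. F (e, w)) else 0)" .
    qed simp
    finally show ?thesis by (simp add: sum_negf)
  qed
  have single: "(\<Sum>w\<in>ends e - {v}. h w) = h w'" if "e \<in> E" "v \<in> ends e" "w' \<noteq> v" "ends e = {v, w'}" for e v w' and h :: "'v \<Rightarrow> real"
  proof -
    have "ends e - {v} = {w'}" using that by auto
    then show ?thesis by simp
  qed
  define f where "f = (\<lambda>i::'e \<times> 'v. x (fst i))"
  have feq: "\<forall>n\<in>N. (\<Sum>i\<in>I. A n i * f i) = 0"
  proof
    fix n assume n: "n \<in> N"
    obtain v b where vb: "n = (v, b)" "v \<in> V" using n N_def by auto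
    have base: "(\<Sum>e\<in>E. if v \<in> ends e then sg e * x e else 0) = 0"
      using color_sum[OF finE, of v ends col x] xbal vb(2) unfolding sg_def by simp
    show "(\<Sum>i\<in>I. A n i * f i) = 0"
    proof (cases b)
      case True
      have "(\<Sum>i\<in>I. A (v, True) i * f i) = (\<Sum>e\<in>E. if v \<in> ends e then sg e * x e else 0)"
      proof -
        have a1: "(\<Sum>i\<in>I. A (v, True) i * f i) = (\<Sum>e\<in>E. if v \<in> ends e then sg e * f (e, v) else 0)"
          by (rule eqT)
        have a2: "(\<Sum>e\<in>E. if v \<in> ends e then sg e * f (e, v) else 0) = (\<Sum>e\<in>E. if v \<in> ends e then sg e * x e else 0)"
          by (rule sum.cong) (simp_all add: f_def)
        show ?thesis using a1 a2 by simp
      qed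
      then show ?thesis using vb base True by simp
    next
      case False
      have "(\<Sum>e\<in>E. if v \<in> ends e then sg e * (\<Sum>w\<in>ends e - {v}. f (e, w)) else 0)
          = (\<Sum>e\<in>E. if v \<in> ends e then sg e * x e else 0)"
      proof (rule sum.cong)
        fix e assume e: "e \<in> E"
        show "(if v \<in> ends e then sg e * (\<Sum>w\<in>ends e - {v}. f (e, w)) else 0) = (if v \<in> ends e then sg e * x e else 0)"
        proof (cases "v \<in> ends e")
          case True
          obtain w' where "w' \<noteq> v" "ends e = {v, w'}" using other[OF e True] by blast
          then show ?thesis using single[OF e True, of w' "\<lambda>w. f (e, w)"] True by (simp add: f_def)
        qed simp
      qed simp
      then show ?thesis using vb base False eqF[of v f] by simp
    qed
  qed
  have fb: "\<forall>i\<in>I. real_of_int (int (l (fst i))) \<le> f i \<and> f i \<le> real_of_int (int (u (fst i)))"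
    using xb I_def f_def by auto
  obtain g :: "'e \<times> 'v \<Rightarrow> real" where
    gi: "\<forall>i\<in>I. g i \<in> \<int> \<and> real_of_int (int (l (fst i))) \<le> g i \<and> g i \<le> real_of_int (int (u (fst i)))"
    and geq: "\<forall>n\<in>N. (\<Sum>i\<in>I. A n i * g i) = 0"
    using round_circ[OF finI finN colA, of f "\<lambda>i. int (l (fst i))" "\<lambda>i. int (u (fst i))"] feq fb
    by blast
  define y where "y = (\<lambda>e. if e \<in> E then (\<Sum>w\<in>ends e. g (e, w)) else 0)"
  have ybd: "y e \<in> \<int> \<and> 2 * real (l e) \<le> y e \<and> y e \<le> 2 * real (u e)" if e: "e \<in> E" for e
  proof -
    have gw: "\<forall>w\<in>ends e. g (e, w) \<in> \<int> \<and> real (l e) \<le> g (e, w) \<and> g (e, w) \<le> real (u e)"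
      using gi e I_def by auto
    have "y e \<in> \<int>" using gw e y_def by (auto intro: Ints_sum)
    moreover have "(\<Sum>w\<in>ends e. real (l e)) \<le> (\<Sum>w\<in>ends e. g (e, w))"
      by (rule sum_mono) (use gw in auto)
    moreover have "(\<Sum>w\<in>ends e. g (e, w)) \<le> (\<Sum>w\<in>ends e. real (u e))"
      by (rule sum_mono) (use gw in auto)
    moreover have "y e = (\<Sum>w\<in>ends e. g (e, w))" using e y_def by simp
    ultimately show ?thesis using card2 e by simp
  qed
  have ybal: "(\<Sum>e\<in>{e\<in>E. v \<in> ends e \<and> col e = Red}. y e) = (\<Sum>e\<in>{e\<in>E. v \<in> ends e \<and> col e = Blue}. y e)"
    if v: "v \<in> V" for v
  proof -
    have t: "(\<Sum>i\<in>I. A (v, True) i * g i) = 0" and fl: "(\<Sum>i\<in>I. A (v, False) i * g i) = 0"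
      using geq v N_def by auto
    have "(\<Sum>e\<in>E. if v \<in> ends e then sg e * y e else 0)
       = (\<Sum>e\<in>E. if v \<in> ends e then sg e * g (e, v) else 0) + (\<Sum>e\<in>E. if v \<in> ends e then sg e * (\<Sum>w\<in>ends e - {v}. g (e, w)) else 0)"
      unfolding sum.distrib[symmetric]
    proof (rule sum.cong)
      fix e assume e: "e \<in> E"
      show "(if v \<in> ends e then sg e * y e else 0) = (if v \<in> ends e then sg e * g (e, v) else 0) + (if v \<in> ends e then sg e * (\<Sum>w\<in>ends e - {v}. g (e, w)) else 0)"
        using e finends by (simp add: y_def sum.remove distrib_left)
    qed simp
    also have "\<dots> = 0" using t fl eqT[of v g] eqF[of v g] by simp
    finally have "(\<Sum>e\<in>E. if v \<in> ends e then (if col e = Red then 1 else -1) * y e else 0) = 0"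
      unfolding sg_def by simp
    then show ?thesis using color_sum[OF finE, of v ends col y] by simp
  qed
  have "y \<in> alternating_cone V E ends col"
    unfolding alternating_cone_def
  proof (intro CollectI conjI allI impI ballI)
    show "e \<notin> E \<Longrightarrow> y e = 0" for e by (simp add: y_def)
    show "e \<in> E \<Longrightarrow> 0 \<le> y e" for e using ybd[of e] by linarith
    show "v \<in> V \<Longrightarrow> (\<Sum>e\<in>{e\<in>E. v \<in> ends e \<and> col e = Red}. y e) = (\<Sum>e\<in>{e\<in>E. v \<in> ends e \<and> col e = Blue}. y e)" for v
      using ybal by blast
  qed
  then show ?thesis using ybd by blast
qed

end
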